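(* Fix $\omega_1,\omega_2,\omega_3>0$ with $\omega_1\le\omega_2\le\omega_3$ and fix $E>0$. For each integer $N\ge 1$ set $\hbar:=N^{-1/3}$ and \[ n_1^{\max}:=\lfloor N^{1/3}E\rfloor,\qquad n_2^{\max}:=\Big\lfloor N^{1/3}E\,\tfrac{\omega_1}{\omega_2}\Big\rfloor,\qquad n_3^{\max}:=\Big\lfloor N^{1/3}E\,\tfrac{\omega_1}{\omega_3}\Big\rfloor . \] Define the orthogonal projection on $L^2(\mathbb{R}^3)$ \[ \omega_N:=\sum_{n_1=0}^{n_1^{\max}}\sum_{n_2=0}^{n_2^{\max}}\sum_{n_3=0}^{n_3^{\max}}\lvert n_1,n_2,n_3\rangle\langle n_1,n_2,n_3\rvert . \] Then there is a constant $C>0$, independent of $N$, such that for all $N\ge1$ and all $i\in\{1,2,3\}$ \[ \lVert [x_i,\omega_N]\rVert_{\mathrm{tr}}\le C N\hbar\qquad\text{and}\qquad \lVert [p_i,\omega_N]\rVert_{\mathrm{tr}}\le C N\hbar . \]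
   Context: $x_i$ denotes the position (multiplication) operator in the $i$-th coordinate on $L^2(\mathbb{R}^3)$ and $p_i:=-i\hbar\,\partial_{x_i}$ the momentum operator, with $\hbar=N^{-1/3}$. For each $i\in\{1,2,3\}$ define the annihilation and creation operators $a_i:=\sqrt{\omega_i/(2\hbar)}\,(x_i+\tfrac{i}{\omega_i}p_i)$ and $a_i^*:=\sqrt{\omega_i/(2\hbar)}\,(x_i-\tfrac{i}{\omega_i}p_i)$. For $n\in\mathbb{N}_0$ let $\lvert n\rangle_i$ be the normalized eigenfunctions (Hermite functions in the variable $x_i$, depending on $\hbar$ and $\omega_i$) with $a_i\lvert 0\rangle_i=0$ and $\lvert n\rangle_i=(n!)^{-1/2}(a_i^* )^n\lvert 0\rangle_i$, so that $a_i^*\lvert n\rangle_i=\sqrt{n+1}\lvert n+1\rangle_i$, $a_i\lvert n\rangle_i=\sqrt n\lvert n-1\rangle_i$. Then $\lvert n_1,n_2,n_3\rangle:=\lvert n_1\rangle_1\otimes\lvert n_2\rangle_2\otimes\lvert n_3\rangle_3\in L^2(\mathbb{R}^3)$; these are the eigenfunctions of the anisotropic harmonic oscillator $h=\sum_{i=1}^3(p_i^2+\omega_i^2x_i^2)=\hbar\sum_i2\omega_i(a_i^*a_i+\tfrac12)$, and $\omega_N$ is the one-particle reduced density matrix of the Slater determinant ground state of non-interacting fermions in this trap filled up to a common energy level. $\lVert\cdot\rVert_{\mathrm{tr}}$ is the trace norm. *)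

theory Defs
  imports "HOL-Analysis.Analysis"
begin

text \<open>
  We work in the orthonormal Hermite basis |n1,n2,n3> of L^2(R^3).  Via the unitary
  map sending |n1,n2,n3> to the n-th unit vector, operators on L^2(R^3) are represented
  by their matrices A m n = <m|A|n>, indexed by triples of natural numbers.
  The coordinate index i ranges over {1,2,3}.
\<close>

type_synonym idx = "nat \<times> nat \<times> nat"
type_synonym opmat = "idx \<Rightarrow> idx \<Rightarrow> complex"

definition coord :: "nat \<Rightarrow> idx \<Rightarrow> nat" where
  "coord i n = (case n of (a, b, c) \<Rightarrow> if i = 1 then a else if i = 2 then b else c)"

definition same_except :: "nat \<Rightarrow> idx \<Rightarrow> idx \<Rightarrow> bool" where
  "same_except i m n \<longleftrightarrow> (\<forall>j\<in>{1,2,3}. j \<noteq> i \<longrightarrow> coord j m = coord j n)"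

definition ann :: "nat \<Rightarrow> opmat" where
  "ann i m n = (if same_except i m n \<and> coord i m + 1 = coord i n
                then complex_of_real (sqrt (real (coord i n))) else 0)"

definition cre :: "nat \<Rightarrow> opmat" where
  "cre i m n = (if same_except i m n \<and> coord i m = coord i n + 1
                then complex_of_real (sqrt (real (coord i n) + 1)) else 0)"

text \<open>With c = sqrt(omega_i/(2 hbar)), a = c (x + i p/omega), a^* = c (x - i p/omega), hence
  x = (a + a^*)/(2c) and p = omega (a - a^*)/(2 i c).\<close>
definition cfac :: "real \<Rightarrow> (nat \<Rightarrow> real) \<Rightarrow> nat \<Rightarrow> real" where
  "cfac hb w i = sqrt (w i / (2 * hb))"

definition x_op :: "real \<Rightarrow> (nat \<Rightarrow> real) \<Rightarrow> nat \<Rightarrow> opmat" where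
  "x_op hb w i = (\<lambda>m n. (ann i m n + cre i m n) / (2 * complex_of_real (cfac hb w i)))"

definition p_op :: "real \<Rightarrow> (nat \<Rightarrow> real) \<Rightarrow> nat \<Rightarrow> opmat" where
  "p_op hb w i = (\<lambda>m n. complex_of_real (w i) * (ann i m n - cre i m n)
                          / (2 * \<i> * complex_of_real (cfac hb w i)))"

definition ketbra :: "idx \<Rightarrow> opmat" where
  "ketbra k = (\<lambda>m n. if m = k \<and> n = k then 1 else 0)"

definition mat_mult :: "opmat \<Rightarrow> opmat \<Rightarrow> opmat" where
  "mat_mult A B = (\<lambda>m n. infsum (\<lambda>k. A m k * B k n) UNIV)"

definition commutator :: "opmat \<Rightarrow> opmat \<Rightarrow> opmat" where
  "commutator A B = (\<lambda>m n. mat_mult A B m n - mat_mult B A m n)"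

definition adj :: "opmat \<Rightarrow> opmat" where
  "adj A = (\<lambda>m n. cnj (A n m))"

definition fin_supp :: "opmat \<Rightarrow> bool" where
  "fin_supp A \<longleftrightarrow> finite {(m, n). A m n \<noteq> 0}"

definition psd :: "opmat \<Rightarrow> bool" where
  "psd P \<longleftrightarrow> (\<forall>m n. P m n = cnj (P n m)) \<and>
     (\<forall>v :: idx \<Rightarrow> complex. finite {k. v k \<noteq> 0} \<longrightarrow>
        0 \<le> Re (\<Sum>m\<in>{k. v k \<noteq> 0}. \<Sum>n\<in>{k. v k \<noteq> 0}. cnj (v m) * P m n * v n))"

definition abs_op :: "opmat \<Rightarrow> opmat" where
  "abs_op A = (THE P. fin_supp P \<and> psd P \<and> mat_mult P P = mat_mult (adj A) A)"

definition trace_norm :: "opmat \<Rightarrow> real" where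
  "trace_norm A = Re (infsum (\<lambda>n. abs_op A n n) UNIV)"

definition hbar :: "nat \<Rightarrow> real" where
  "hbar N = real N powr (-1/3)"

definition nmax :: "(nat \<Rightarrow> real) \<Rightarrow> real \<Rightarrow> nat \<Rightarrow> nat \<Rightarrow> nat" where
  "nmax w E N j = nat \<lfloor>real N powr (1/3) * E * (w 1 / w j)\<rfloor>"

definition box :: "(nat \<Rightarrow> real) \<Rightarrow> real \<Rightarrow> nat \<Rightarrow> idx set" where
  "box w E N = {0..nmax w E N 1} \<times> {0..nmax w E N 2} \<times> {0..nmax w E N 3}"

definition omegaN :: "(nat \<Rightarrow> real) \<Rightarrow> real \<Rightarrow> nat \<Rightarrow> opmat" where
  "omegaN w E N = (\<lambda>m n. \<Sum>k\<in>box w E N. ketbra k m n)"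

end

theory Submission
  imports Defs
begin


lemma infsum_supp:
  fixes f :: "'a \<Rightarrow> 'b::{comm_monoid_add, t2_space}"
  assumes "finite F" "\<And>x. x \<notin> F \<Longrightarrow> f x = 0"
  shows "infsum f UNIV = sum f F"
proof -
  have "infsum f UNIV = infsum f F"
    by (rule infsum_cong_neutral) (use assms in auto)
  also have "\<dots> = sum f F" using assms(1) by simp
  finally show ?thesis .
qed

definition diagm :: "(idx \<Rightarrow> real) \<Rightarrow> opmat" where
  "diagm d = (\<lambda>m n. if m = n then complex_of_real (d m) else 0)"

lemma fin_supp_R:
  assumes "fin_supp P"
  obtains R where "finite R" "\<And>m n. P m n \<noteq> 0 \<Longrightarrow> m \<in> R \<and> n \<in> R"
proof -
  let ?S = "{(m, n). P m n \<noteq> 0}"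
  have "finite ?S" using assms unfolding fin_supp_def .
  then have "finite (fst ` ?S \<union> snd ` ?S)" by auto
  moreover have "\<And>m n. P m n \<noteq> 0 \<Longrightarrow> m \<in> fst ` ?S \<union> snd ` ?S \<and> n \<in> fst ` ?S \<union> snd ` ?S"
    by (auto intro: image_eqI[where x="(_, _)"])
  ultimately show ?thesis using that by blast
qed

lemma sqrt_unique:
  assumes fs: "fin_supp P" and ps: "psd P" and sq: "mat_mult P P = diagm d"
    and dpos: "\<And>m. d m \<ge> 0"
  shows "P = diagm (\<lambda>m. sqrt (d m))"
proof -
  obtain R where R: "finite R" "\<And>m n. P m n \<noteq> 0 \<Longrightarrow> m \<in> R \<and> n \<in> R"
    using fin_supp_R[OF fs] by blast
  have herm0: "\<forall>m n. P m n = cnj (P n m)" using ps unfolding psd_def by (rule conjunct1)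
  note herm = herm0[rule_format]
  have qf: "\<forall>v :: idx \<Rightarrow> complex. finite {k. v k \<noteq> 0} \<longrightarrow>
        0 \<le> Re (\<Sum>m\<in>{k. v k \<noteq> 0}. \<Sum>n\<in>{k. v k \<noteq> 0}. cnj (v m) * P m n * v n)"
    using ps unfolding psd_def by (rule conjunct2)
  have mm: "(\<Sum>l\<in>R. P m l * P l n) = (if m = n then complex_of_real (d m) else 0)" for m n
  proof -
    have "mat_mult P P m n = (\<Sum>l\<in>R. P m l * P l n)"
      unfolding mat_mult_def by (rule infsum_supp[OF R(1)]) (use R(2) in fastforce)
    then show ?thesis using sq by (simp add: diagm_def)
  qed
  have col: "P m k = diagm (\<lambda>m. sqrt (d m)) m k" for m k
  proof (cases "d k = 0")
    case True
    have "(\<Sum>l\<in>R. P k l * P l k) = 0" using mm[of k k] True by simp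
    moreover have "(\<Sum>l\<in>R. P k l * P l k) = (\<Sum>l\<in>R. complex_of_real ((cmod (P l k))\<^sup>2))"
      by (rule sum.cong[OF refl], subst complex_norm_square, simp add: herm[of k] mult.commute)
    ultimately have "complex_of_real (\<Sum>l\<in>R. (cmod (P l k))\<^sup>2) = 0"
      by (simp only: of_real_sum)
    then have "(\<Sum>l\<in>R. (cmod (P l k))\<^sup>2) = 0" by (simp only: of_real_eq_0_iff)
    then have "\<forall>l\<in>R. (cmod (P l k))\<^sup>2 = 0"
      using R(1) by (subst (asm) sum_nonneg_eq_0_iff) auto
    then have "P m k = 0" using R(2)[of m k] by auto
    then show ?thesis using True by (simp add: diagm_def)
  next
    case False
    then have dk: "d k > 0" using dpos[of k] by linarith
    define s where "s = sqrt (d k)"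
    have s0: "s > 0" using dk by (simp add: s_def)
    have ss: "s * s = d k" using dpos[of k] by (simp add: s_def)
    define u where "u = (\<lambda>m. P m k - (if m = k then complex_of_real s else 0))"
    define R' where "R' = insert k R"
    have fR': "finite R'" using R(1) by (simp add: R'_def)
    have usupp: "u l \<noteq> 0 \<Longrightarrow> l \<in> R'" for l
      using R(2)[of l k] by (auto simp: u_def R'_def split: if_splits)
    have Pu: "(\<Sum>l\<in>R'. P m l * u l) = - complex_of_real s * u m" for m
    proof -
      have e1: "(\<Sum>l\<in>R'. P m l * P l k) = (\<Sum>l\<in>R. P m l * P l k)"
        by (rule sum.mono_neutral_right) (use R fR' in \<open>auto simp: R'_def\<close>)
      have e2: "(\<Sum>l\<in>R'. P m l * (if l = k then complex_of_real s else 0)) = P m k * s"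
        using fR' by (simp add: R'_def if_distrib[of "\<lambda>x. P m _ * x"] cong: if_cong)
      have "(\<Sum>l\<in>R'. P m l * u l) = (\<Sum>l\<in>R'. P m l * P l k) - (\<Sum>l\<in>R'. P m l * (if l = k then complex_of_real s else 0))"
        unfolding u_def by (simp add: right_diff_distrib sum_subtractf)
      also have "\<dots> = (if m = k then complex_of_real (d k) else 0) - P m k * s"
        using e1 e2 mm[of m k] by simp
      also have "\<dots> = - complex_of_real s * u m"
        by (auto simp: u_def algebra_simps ss[symmetric])
      finally show ?thesis .
    qed
    define V where "V = {l. u l \<noteq> 0}"
    have VR: "V \<subseteq> R'" using usupp by (auto simp: V_def)
    have fV: "finite V" using VR fR' finite_subset by blast
    have "0 \<le> Re (\<Sum>m\<in>V. \<Sum>n\<in>V. cnj (u m) * P m n * u n)"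
      using qf[rule_format, of u] fV unfolding V_def by simp
    also have "(\<Sum>m\<in>V. \<Sum>n\<in>V. cnj (u m) * P m n * u n) = (\<Sum>m\<in>V. cnj (u m) * (\<Sum>n\<in>R'. P m n * u n))"
    proof (rule sum.cong[OF refl])
      fix m assume "m \<in> V"
      have "(\<Sum>n\<in>V. P m n * u n) = (\<Sum>n\<in>R'. P m n * u n)"
        by (rule sum.mono_neutral_left) (use VR fR' in \<open>auto simp: V_def\<close>)
      then show "(\<Sum>n\<in>V. cnj (u m) * P m n * u n) = cnj (u m) * (\<Sum>n\<in>R'. P m n * u n)"
        by (simp add: sum_distrib_left[symmetric] mult.assoc)
    qed
    also have "\<dots> = (\<Sum>m\<in>V. - complex_of_real (s * (cmod (u m))\<^sup>2))"
      by (rule sum.cong[OF refl], subst of_real_mult, subst complex_norm_square, simp only: Pu, simp add: algebra_simps)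
    finally have "0 \<le> - s * (\<Sum>m\<in>V. (cmod (u m))\<^sup>2)"
      by (simp add: sum_distrib_left)
    then have "(\<Sum>m\<in>V. (cmod (u m))\<^sup>2) \<le> 0" using s0
      by (simp add: mult_le_0_iff)
    then have "\<forall>m\<in>V. (cmod (u m))\<^sup>2 = 0"
    proof -
      have "(\<Sum>m\<in>V. (cmod (u m))\<^sup>2) = 0"
        using \<open>(\<Sum>m\<in>V. (cmod (u m))\<^sup>2) \<le> 0\<close> by (simp add: antisym sum_nonneg)
      then show ?thesis using fV by (subst (asm) sum_nonneg_eq_0_iff) auto
    qed
    then have "V = {}" by (auto simp: V_def)
    then have "u m = 0" unfolding V_def by blast
    then show ?thesis by (auto simp: u_def diagm_def s_def)
  qed
  show ?thesis by (intro ext) (rule col)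
qed

lemma diag_sqrt_props:
  assumes dpos: "\<And>m. d m \<ge> 0" and fF: "finite F" and dF: "\<And>m. m \<notin> F \<Longrightarrow> d m = 0"
  defines "Q \<equiv> diagm (\<lambda>m. sqrt (d m))"
  shows "fin_supp Q \<and> psd Q \<and> mat_mult Q Q = diagm d"
proof (intro conjI)
  have "{(m, n). Q m n \<noteq> 0} \<subseteq> (\<lambda>m. (m, m)) ` F"
    using dF by (auto simp: Q_def diagm_def split: if_splits)
  then show "fin_supp Q" unfolding fin_supp_def using fF finite_surj by blast
next
  show "psd Q" unfolding psd_def
  proof (intro conjI allI impI)
    fix m n show "Q m n = cnj (Q n m)" by (simp add: Q_def diagm_def)
  next
    fix v :: "idx \<Rightarrow> complex" assume fv: "finite {k. v k \<noteq> 0}"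
    let ?S = "{k. v k \<noteq> 0}"
    have "(\<Sum>m\<in>?S. \<Sum>n\<in>?S. cnj (v m) * Q m n * v n) = (\<Sum>m\<in>?S. complex_of_real (sqrt (d m) * (cmod (v m))\<^sup>2))"
    proof (rule sum.cong[OF refl])
      fix m assume mS: "m \<in> ?S"
      have "(\<Sum>n\<in>?S. cnj (v m) * Q m n * v n) = (\<Sum>n\<in>?S. if n = m then cnj (v m) * complex_of_real (sqrt (d m)) * v m else 0)"
        by (rule sum.cong[OF refl]) (auto simp: Q_def diagm_def)
      also have "\<dots> = cnj (v m) * complex_of_real (sqrt (d m)) * v m"
        using fv mS by (subst sum.delta) auto
      also have "\<dots> = complex_of_real (sqrt (d m)) * (v m * cnj (v m))" by (simp add: algebra_simps)
      also have "\<dots> = complex_of_real (sqrt (d m) * (cmod (v m))\<^sup>2)"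
        by (subst of_real_mult, subst complex_norm_square) simp
      finally show "(\<Sum>n\<in>?S. cnj (v m) * Q m n * v n) = complex_of_real (sqrt (d m) * (cmod (v m))\<^sup>2)" .
    qed
    also have "Re \<dots> = (\<Sum>m\<in>?S. sqrt (d m) * (cmod (v m))\<^sup>2)"
      by (simp only: of_real_sum[symmetric] Re_complex_of_real)
    also have "\<dots> \<ge> 0" using dpos by (intro sum_nonneg) simp
    finally show "0 \<le> Re (\<Sum>m\<in>?S. \<Sum>n\<in>?S. cnj (v m) * Q m n * v n)" .
  qed
next
  show "mat_mult Q Q = diagm d"
  proof (intro ext)
    fix m n
    have "mat_mult Q Q m n = (\<Sum>k\<in>{m}. Q m k * Q k n)"
      unfolding mat_mult_def by (rule infsum_supp) (auto simp: Q_def diagm_def)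
    also have "\<dots> = diagm d m n"
      using dpos[of m] by (auto simp: Q_def diagm_def simp flip: of_real_mult)
    finally show "mat_mult Q Q m n = diagm d m n" .
  qed
qed

lemma abs_op_diag:
  assumes sq: "mat_mult (adj A) A = diagm d" and dpos: "\<And>m. d m \<ge> 0" and fF: "finite F"
    and dF: "\<And>m. m \<notin> F \<Longrightarrow> d m = 0"
  shows "abs_op A = diagm (\<lambda>m. sqrt (d m))"
proof -
  have Q: "fin_supp (diagm (\<lambda>m. sqrt (d m))) \<and> psd (diagm (\<lambda>m. sqrt (d m))) \<and>
      mat_mult (diagm (\<lambda>m. sqrt (d m))) (diagm (\<lambda>m. sqrt (d m))) = mat_mult (adj A) A"
    using diag_sqrt_props[OF dpos fF dF] sq by simp
  show ?thesis unfolding abs_op_def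
  proof (rule the_equality)
    show "fin_supp (diagm (\<lambda>m. sqrt (d m))) \<and> psd (diagm (\<lambda>m. sqrt (d m))) \<and>
      mat_mult (diagm (\<lambda>m. sqrt (d m))) (diagm (\<lambda>m. sqrt (d m))) = mat_mult (adj A) A" by (rule Q)
  next
    fix P assume "fin_supp P \<and> psd P \<and> mat_mult P P = mat_mult (adj A) A"
    then show "P = diagm (\<lambda>m. sqrt (d m))" using sq by (intro sqrt_unique) (auto intro: dpos)
  qed
qed

lemma trace_norm_diag:
  assumes sq: "mat_mult (adj A) A = diagm d" and dpos: "\<And>m. d m \<ge> 0" and fF: "finite F"
    and dF: "\<And>m. m \<notin> F \<Longrightarrow> d m = 0"
  shows "trace_norm A = (\<Sum>m\<in>F. sqrt (d m))"
proof -
  have "infsum (\<lambda>n. abs_op A n n) UNIV = (\<Sum>n\<in>F. abs_op A n n)"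
    by (rule infsum_supp[OF fF]) (simp add: abs_op_diag[OF assms] diagm_def dF)
  also have "\<dots> = complex_of_real (\<Sum>m\<in>F. sqrt (d m))"
    by (simp add: abs_op_diag[OF assms] diagm_def)
  finally show ?thesis unfolding trace_norm_def by simp
qed



lemma coord_simps[simp]: "coord (Suc 0) (a,b,c) = a" "coord 2 (a,b,c) = b" "coord 3 (a,b,c) = c"
  by (simp_all add: coord_def)
lemma se_simps[simp]: "same_except (Suc 0) (a,b,c) (x,y,z) \<longleftrightarrow> b = y \<and> c = z"
  "same_except 2 (a,b,c) (x,y,z) \<longleftrightarrow> a = x \<and> c = z"
  "same_except 3 (a,b,c) (x,y,z) \<longleftrightarrow> a = x \<and> b = y"
  by (auto simp: same_except_def coord_def)

definition Rel :: "nat \<Rightarrow> idx set \<Rightarrow> idx \<Rightarrow> idx \<Rightarrow> bool" where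
  "Rel i B m n \<longleftrightarrow> same_except i m n \<and> (coord i m + 1 = coord i n \<or> coord i m = coord i n + 1)
     \<and> (m \<in> B \<longleftrightarrow> n \<notin> B)"

definition Tset :: "(nat \<Rightarrow> nat) \<Rightarrow> nat \<Rightarrow> idx set" where
  "Tset M i = {n. (\<forall>j\<in>{1,2,3}. j \<noteq> i \<longrightarrow> coord j n \<le> M j) \<and> M i \<le> coord i n \<and> coord i n \<le> M i + 1}"

lemma rel_sym: "Rel i B m n \<Longrightarrow> Rel i B n m"
  unfolding Rel_def same_except_def by auto

lemma rel_uniq:
  assumes "i \<in> {1,2,3}" "Rel i ({0..M 1}\<times>{0..M 2}\<times>{0..M 3}) m n" "Rel i ({0..M 1}\<times>{0..M 2}\<times>{0..M 3}) m' n"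
  shows "m = m'"
proof -
  obtain a b c where m: "m = (a,b,c)" by (cases m) auto
  obtain a' b' c' where m': "m' = (a',b',c')" by (cases m') auto
  obtain x y z where n: "n = (x,y,z)" by (cases n) auto
  consider "i = 1" | "i = 2" | "i = 3" using assms(1) by auto
  then show ?thesis
  proof cases
    case 1 then show ?thesis using assms(2,3) unfolding m m' n Rel_def by simp arith
  next
    case 2 then show ?thesis using assms(2,3) unfolding m m' n Rel_def by simp arith
  next
    case 3 then show ?thesis using assms(2,3) unfolding m m' n Rel_def by simp arith
  qed
qed

lemma rel_T:
  assumes "i \<in> {1,2,3}" "Rel i ({0..M 1}\<times>{0..M 2}\<times>{0..M 3}) m n"
  shows "n \<in> Tset M i"
proof -
  obtain a b c where m: "m = (a,b,c)" by (cases m) auto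
  obtain x y z where n: "n = (x,y,z)" by (cases n) auto
  consider "i = 1" | "i = 2" | "i = 3" using assms(1) by auto
  then show ?thesis
  proof cases
    case 1 then show ?thesis using assms(2) unfolding m n Rel_def Tset_def by simp arith
  next
    case 2 then show ?thesis using assms(2) unfolding m n Rel_def Tset_def by simp arith
  next
    case 3 then show ?thesis using assms(2) unfolding m n Rel_def Tset_def by simp arith
  qed
qed

lemma Tset_sub: "Tset M i \<subseteq> {0..M 1+1}\<times>{0..M 2+1}\<times>{0..M 3+1}"
  unfolding Tset_def coord_def by (auto split: if_splits)

lemma Tset_finite: "finite (Tset M i)"
  using Tset_sub finite_subset by blast

lemma Tset_card:
  assumes "i \<in> {1,2,3}" "M 1 \<le> L" "M 2 \<le> L" "M 3 \<le> L"
  shows "card (Tset M i) \<le> 2 * (L+1)^2"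
proof -
  have c2: "card {M i, M i + 1} = 2" by simp
  have "\<exists>S. Tset M i \<subseteq> S \<and> finite S \<and> card S = 2 * (L+1)^2"
  proof -
    consider "i = 1" | "i = 2" | "i = 3" using assms(1) by auto
    then show ?thesis
    proof cases
      case 1
      have "Tset M i \<subseteq> {M 1, M 1 + 1} \<times> {0..L} \<times> {0..L}"
        using assms(3,4) 1 unfolding Tset_def by (auto intro: order_trans)
      then show ?thesis by (intro exI[of _ "{M 1, M 1 + 1} \<times> {0..L} \<times> {0..L}"]) (auto simp: card_cartesian_product power2_eq_square)
    next
      case 2
      have "Tset M i \<subseteq> {0..L} \<times> {M 2, M 2 + 1} \<times> {0..L}"
        using assms(2,4) 2 unfolding Tset_def by (auto intro: order_trans)
      then show ?thesis by (intro exI[of _ "{0..L} \<times> {M 2, M 2 + 1} \<times> {0..L}"]) (auto simp: card_cartesian_product power2_eq_square)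
    next
      case 3
      have "Tset M i \<subseteq> {0..L} \<times> {0..L} \<times> {M 3, M 3 + 1}"
        using assms(2,3) 3 unfolding Tset_def by (auto intro: order_trans)
      then show ?thesis by (intro exI[of _ "{0..L} \<times> {0..L} \<times> {M 3, M 3 + 1}"]) (auto simp: card_cartesian_product power2_eq_square)
    qed
  qed
  then show ?thesis using card_mono by fastforce
qed



lemma comm_eq:
  "commutator X (\<lambda>m n. if m = n \<and> m \<in> B then 1 else 0) m n =
     X m n * ((if n \<in> B then 1 else 0) - (if m \<in> B then 1 else 0))"
proof -
  have 1: "mat_mult X (\<lambda>m n. if m = n \<and> m \<in> B then 1 else 0) m n = (\<Sum>k\<in>{n}. X m k * (if k = n \<and> k \<in> B then 1 else 0))"
    unfolding mat_mult_def by (rule infsum_supp) auto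
  have 2: "mat_mult (\<lambda>m n. if m = n \<and> m \<in> B then 1 else 0) X m n = (\<Sum>k\<in>{m}. (if m = k \<and> m \<in> B then 1 else 0) * X k n)"
    unfolding mat_mult_def by (rule infsum_supp) auto
  show ?thesis unfolding commutator_def 1 2 by (simp add: algebra_simps)
qed

lemma omegaN_eq: "omegaN w E N = (\<lambda>m n. if m = n \<and> m \<in> box w E N then 1 else 0)"
proof (intro ext)
  fix m n
  have fb: "finite (box w E N)" by (simp add: box_def)
  show "omegaN w E N m n = (if m = n \<and> m \<in> box w E N then 1 else 0)"
  proof (cases "m = n")
    case True
    then show ?thesis unfolding omegaN_def ketbra_def using fb
      by (simp add: sum.delta)
  next
    case False
    then show ?thesis unfolding omegaN_def ketbra_def by (auto intro: sum.neutral)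
  qed
qed

lemma comm_trace_bound:
  fixes X :: opmat and M :: "nat \<Rightarrow> nat" and K :: real
  assumes i: "i \<in> {1,2,3}"
    and Xs: "\<And>m n. X m n \<noteq> 0 \<Longrightarrow> same_except i m n \<and> (coord i m + 1 = coord i n \<or> coord i m = coord i n + 1)"
    and Xb: "\<And>m n. (cmod (X m n))\<^sup>2 \<le> K * (real (coord i n) + 1)"
    and K: "K \<ge> 0"
  shows "trace_norm (commutator X (\<lambda>m n. if m = n \<and> m \<in> {0..M 1}\<times>{0..M 2}\<times>{0..M 3} then 1 else 0))
     \<le> real (card (Tset M i)) * sqrt (K * (real (M i) + 2))"
proof -
  define B where "B = {0..M 1}\<times>{0..M 2}\<times>{0..M 3}"
  define A where "A = commutator X (\<lambda>m n. if m = n \<and> m \<in> B then 1 else 0)"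
  have Aeq: "A m n = X m n * ((if n \<in> B then 1 else 0) - (if m \<in> B then 1 else 0))" for m n
    unfolding A_def by (rule comm_eq)
  have AR: "Rel i B m n" if "A m n \<noteq> 0" for m n
  proof -
    have "X m n \<noteq> 0" "(n \<in> B) \<noteq> (m \<in> B)" using that by (auto simp: Aeq split: if_splits)
    then show ?thesis using Xs[of m n] unfolding Rel_def by auto
  qed
  have Ab: "(cmod (A m n))\<^sup>2 \<le> (cmod (X m n))\<^sup>2" for m n
    by (auto simp: Aeq norm_mult)
  define F where "F = {0..M 1+1}\<times>{0..M 2+1}\<times>{0..M 3+1}"
  have fF: "finite F" by (simp add: F_def)
  have AT: "n \<in> Tset M i" if "A m n \<noteq> 0" for m n
    using rel_T[OF i] AR[OF that] unfolding B_def by blast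
  have AT': "m \<in> Tset M i" if "A m n \<noteq> 0" for m n
    using rel_T[OF i] rel_sym[OF AR[OF that]] unfolding B_def by blast
  have AF: "m \<in> F" if "A m n \<noteq> 0" for m n
    using AT'[OF that] Tset_sub unfolding F_def by blast
  have uniq: "m = m'" if "A m n \<noteq> 0" "A m' n \<noteq> 0" for m m' n
    using rel_uniq[OF i] AR[OF that(1)] AR[OF that(2)] unfolding B_def by blast
  have uniq2: "k = l" if "A m k \<noteq> 0" "A m l \<noteq> 0" for m k l
    using rel_uniq[OF i] rel_sym[OF AR[OF that(1)]] rel_sym[OF AR[OF that(2)]] unfolding B_def by blast
  define d where "d k = (\<Sum>m\<in>F. (cmod (A m k))\<^sup>2)" for k
  have sq: "mat_mult (adj A) A = diagm d"
  proof (intro ext)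
    fix k l
    have "mat_mult (adj A) A k l = (\<Sum>m\<in>F. cnj (A m k) * A m l)"
      unfolding mat_mult_def adj_def
      by (rule infsum_supp[OF fF]) (use AF in fastforce)
    also have "\<dots> = diagm d k l"
    proof (cases "k = l")
      case True
      have "(\<Sum>m\<in>F. cnj (A m k) * A m l) = (\<Sum>m\<in>F. complex_of_real ((cmod (A m k))\<^sup>2))"
        using True by (intro sum.cong refl, subst complex_norm_square, simp add: mult.commute)
      then show ?thesis by (simp add: diagm_def d_def True)
    next
      case False
      have "cnj (A m k) * A m l = 0" for m
        using uniq2[of m k l] False by auto
      then have "(\<Sum>m\<in>F. cnj (A m k) * A m l) = 0" by (intro sum.neutral) blast
      then show ?thesis using False by (simp add: diagm_def)
    qed
    finally show "mat_mult (adj A) A k l = diagm d k l" .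
  qed
  have dpos: "d k \<ge> 0" for k unfolding d_def by (intro sum_nonneg) auto
  have dT: "d k = 0" if "k \<notin> Tset M i" for k
    unfolding d_def using AT that by (intro sum.neutral) fastforce
  have tn: "trace_norm A = (\<Sum>k\<in>Tset M i. sqrt (d k))"
    by (rule trace_norm_diag[OF sq dpos Tset_finite dT])
  have dbound: "d k \<le> K * (real (M i) + 2)" if kT: "k \<in> Tset M i" for k
  proof -
    define G where "G = {m\<in>F. A m k \<noteq> 0}"
    have "d k = (\<Sum>m\<in>G. (cmod (A m k))\<^sup>2)"
      unfolding d_def G_def by (rule sum.mono_neutral_right) (use fF in auto)
    moreover have "(\<Sum>m\<in>G. (cmod (A m k))\<^sup>2) \<le> K * (real (M i) + 2)"
    proof (cases "G = {}")
      case True then show ?thesis using K by simp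
    next
      case False
      then obtain m0 where m0: "m0 \<in> G" by blast
      then have "G = {m0}" using uniq unfolding G_def by blast
      moreover have "coord i k \<le> M i + 1" using kT unfolding Tset_def by auto
      then have "K * (real (coord i k) + 1) \<le> K * (real (M i) + 2)"
        using K by (intro mult_left_mono) auto
      moreover have "(cmod (A m0 k))\<^sup>2 \<le> K * (real (coord i k) + 1)"
        using Ab[of m0 k] Xb[of m0 k] by linarith
      ultimately show ?thesis by simp
    qed
    ultimately show ?thesis by simp
  qed
  have "(\<Sum>k\<in>Tset M i. sqrt (d k)) \<le> (\<Sum>k\<in>Tset M i. sqrt (K * (real (M i) + 2)))"
    by (intro sum_mono) (simp add: dbound)
  then show ?thesis using tn unfolding A_def B_def by simp
qed



lemma ann_cre_bound:
  "(cmod (ann i m n + cre i m n))\<^sup>2 \<le> real (coord i n) + 1 \<and>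
   (cmod (ann i m n - cre i m n))\<^sup>2 \<le> real (coord i n) + 1"
  by (auto simp: ann_def cre_def)

lemma ann_cre_supp:
  "ann i m n \<noteq> 0 \<or> cre i m n \<noteq> 0 \<Longrightarrow>
     same_except i m n \<and> (coord i m + 1 = coord i n \<or> coord i m = coord i n + 1)"
  by (auto simp: ann_def cre_def split: if_splits)

lemma nmax_le:
  assumes "w 1 > 0" "w j \<ge> w 1" "E > 0" "N \<ge> 1"
  shows "nmax w E N j \<le> nat \<lfloor>real N powr (1/3) * E\<rfloor>"
proof -
  have t0: "real N powr (1/3) * E \<ge> 0" using assms by simp
  have "w 1 / w j \<le> 1" using assms by simp
  then have "real N powr (1/3) * E * (w 1 / w j) \<le> real N powr (1/3) * E"
    using t0 mult_left_mono[of "w 1 / w j" 1 "real N powr (1/3) * E"] by simp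
  then show ?thesis unfolding nmax_def by (intro nat_mono floor_mono)
qed

lemma op_bounds:
  assumes hb: "hb > 0" and wi: "w i > 0"
  shows "(cmod (x_op hb w i m n))\<^sup>2 \<le> hb / (2 * w i) * (real (coord i n) + 1)"
    and "(cmod (p_op hb w i m n))\<^sup>2 \<le> hb * w i / 2 * (real (coord i n) + 1)"
proof -
  define c where "c = cfac hb w i"
  have c0: "c > 0" using hb wi by (simp add: c_def cfac_def)
  have c2: "c\<^sup>2 = w i / (2 * hb)" using hb wi by (simp add: c_def cfac_def)
  have d: "(2 * c)\<^sup>2 = 2 * w i / hb" using c2 hb by (simp add: power_mult_distrib)
  have "(cmod (x_op hb w i m n))\<^sup>2 = (cmod (ann i m n + cre i m n))\<^sup>2 / (2 * c)\<^sup>2"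
    using c0 by (simp add: x_op_def c_def norm_divide norm_mult power_divide)
  also have "\<dots> \<le> (real (coord i n) + 1) / (2 * c)\<^sup>2"
    using ann_cre_bound[of i m n] c0 by (intro divide_right_mono) auto
  also have "\<dots> = hb / (2 * w i) * (real (coord i n) + 1)" using d hb wi by simp
  finally show "(cmod (x_op hb w i m n))\<^sup>2 \<le> hb / (2 * w i) * (real (coord i n) + 1)" .
  have "(cmod (p_op hb w i m n))\<^sup>2 = (w i)\<^sup>2 * (cmod (ann i m n - cre i m n))\<^sup>2 / (2 * c)\<^sup>2"
    using c0 wi by (simp add: p_op_def c_def norm_divide norm_mult power_divide power_mult_distrib)
  also have "\<dots> \<le> (w i)\<^sup>2 * (real (coord i n) + 1) / (2 * c)\<^sup>2"
    using ann_cre_bound[of i m n] c0 by (intro divide_right_mono mult_left_mono) auto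
  also have "\<dots> = hb * w i / 2 * (real (coord i n) + 1)" using d hb wi by (simp add: power2_eq_square)
  finally show "(cmod (p_op hb w i m n))\<^sup>2 \<le> hb * w i / 2 * (real (coord i n) + 1)" .
qed

lemma x_supp: "x_op hb w i m n \<noteq> 0 \<Longrightarrow> same_except i m n \<and> (coord i m + 1 = coord i n \<or> coord i m = coord i n + 1)"
  by (rule ann_cre_supp) (auto simp: x_op_def)

lemma p_supp: "p_op hb w i m n \<noteq> 0 \<Longrightarrow> same_except i m n \<and> (coord i m + 1 = coord i n \<or> coord i m = coord i n + 1)"
  by (rule ann_cre_supp) (auto simp: p_op_def)



lemma final_step:
  fixes X :: opmat
  assumes i: "i \<in> {1,2,3}"
    and Xs: "\<And>m n. X m n \<noteq> 0 \<Longrightarrow> same_except i m n \<and> (coord i m + 1 = coord i n \<or> coord i m = coord i n + 1)"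
    and Xb: "\<And>m n. (cmod (X m n))\<^sup>2 \<le> K * (real (coord i n) + 1)"
    and K: "K \<ge> 0" and KG: "K * (t * E + 2) \<le> G"
    and t: "t \<ge> 1" and E: "E > 0"
    and L: "nmax w E N 1 \<le> L" "nmax w E N 2 \<le> L" "nmax w E N 3 \<le> L" "real L \<le> t * E"
  shows "trace_norm (commutator X (omegaN w E N)) \<le> 2 * (E + 1)\<^sup>2 * sqrt G * t\<^sup>2"
proof -
  define M where "M = nmax w E N"
  have om: "omegaN w E N = (\<lambda>m n. if m = n \<and> m \<in> {0..M 1}\<times>{0..M 2}\<times>{0..M 3} then 1 else 0)"
    unfolding omegaN_eq box_def M_def ..
  have tb: "trace_norm (commutator X (omegaN w E N)) \<le> real (card (Tset M i)) * sqrt (K * (real (M i) + 2))"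
    unfolding om by (rule comm_trace_bound[OF i Xs Xb K])
  have Mi: "M i \<le> L" using i L by (auto simp: M_def)
  have "real (M i) \<le> t * E" using Mi L(4) by linarith
  then have "K * (real (M i) + 2) \<le> K * (t * E + 2)" using K by (intro mult_left_mono) auto
  then have sq: "sqrt (K * (real (M i) + 2)) \<le> sqrt G" using KG by simp
  have "card (Tset M i) \<le> 2 * (L + 1)\<^sup>2" using Tset_card[OF i] L by (simp add: M_def)
  then have "real (card (Tset M i)) \<le> 2 * (real L + 1)\<^sup>2"
    by (metis (mono_tags) of_nat_1 of_nat_add of_nat_le_iff of_nat_mult of_nat_numeral of_nat_power)
  also have "\<dots> \<le> 2 * (t * (E + 1))\<^sup>2"
  proof -
    have "real L + 1 \<le> t * (E + 1)" using L(4) t by (simp add: algebra_simps)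
    then show ?thesis by (intro mult_left_mono power_mono) auto
  qed
  finally have cb: "real (card (Tset M i)) \<le> 2 * (t * (E + 1))\<^sup>2" .
  have "real (card (Tset M i)) * sqrt (K * (real (M i) + 2)) \<le> 2 * (t * (E + 1))\<^sup>2 * sqrt G"
    using cb sq K by (intro mult_mono) auto
  moreover have "2 * (t * (E + 1))\<^sup>2 * sqrt G = 2 * (E + 1)\<^sup>2 * sqrt G * t\<^sup>2"
    by (simp add: power_mult_distrib)
  ultimately show ?thesis using tb by linarith
qed

theorem theorem3p2:
  fixes w :: "nat \<Rightarrow> real" and E :: real
  assumes "w 1 > 0" and "w 2 > 0" and "w 3 > 0"
    and "w 1 \<le> w 2" and "w 2 \<le> w 3" and "E > 0"
  shows "\<exists>C>0. \<forall>N::nat. N \<ge> 1 \<longrightarrow> (\<forall>i\<in>{1,2,3}.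
           trace_norm (commutator (x_op (hbar N) w i) (omegaN w E N)) \<le> C * real N * hbar N \<and>
           trace_norm (commutator (p_op (hbar N) w i) (omegaN w E N)) \<le> C * real N * hbar N)"
proof -
  define G where "G = (E + 2) / (2 * w 1) + w 3 * (E + 2) / 2"
  define C where "C = 2 * (E + 1)\<^sup>2 * sqrt G"
  have "(E + 2) / (2 * w 1) > 0" "w 3 * (E + 2) / 2 > 0" using assms by auto
  then have G0: "G > 0" unfolding G_def by linarith
  have C0: "C > 0" using G0 assms by (simp add: C_def)
  show ?thesis
  proof (intro exI[of _ C] conjI allI impI ballI)
    show "C > 0" by (rule C0)
  next
    fix N :: nat and i :: nat
    assume N: "N \<ge> 1" and i: "i \<in> {1,2,3}"
    define t where "t = real N powr (1/3)"
    have t1: "t \<ge> 1" unfolding t_def using N by (intro ge_one_powr_ge_zero) auto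
    have hb: "hbar N = inverse t" unfolding hbar_def t_def by (simp add: powr_minus)
    have N3: "real N = t ^ 3" unfolding t_def using N by (subst powr_power) auto
    have Nh: "C * real N * hbar N = C * t\<^sup>2" using t1 by (simp add: hb N3 power2_eq_square power3_eq_cube)
    have hb0: "hbar N > 0" using t1 hb by simp
    have wi: "w i > 0" "w 1 \<le> w i" "w i \<le> w 3" using i assms by auto
    define L where "L = nat \<lfloor>real N powr (1/3) * E\<rfloor>"
    have L: "nmax w E N 1 \<le> L" "nmax w E N 2 \<le> L" "nmax w E N 3 \<le> L"
      unfolding L_def using assms N by (auto intro!: nmax_le)
    have L4: "real L \<le> t * E"
    proof -
      have "t * E \<ge> 0" using t1 assms by simp
      then show ?thesis unfolding L_def t_def by linarith
    qed
    have Et: "(t * E + 2) / t \<le> E + 2"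
      using t1 assms by (simp add: divide_simps) (simp add: algebra_simps)
    have Kx0: "hbar N / (2 * w i) \<ge> 0" using hb0 wi(1) by (intro divide_nonneg_pos) auto
    have x: "trace_norm (commutator (x_op (hbar N) w i) (omegaN w E N)) \<le> C * t\<^sup>2"
    proof -
      have KG: "hbar N / (2 * w i) * (t * E + 2) \<le> G"
      proof -
        have "hbar N / (2 * w i) * (t * E + 2) = ((t * E + 2) / t) / (2 * w i)"
          by (simp add: hb field_simps)
        also have "\<dots> \<le> (E + 2) / (2 * w 1)"
          using Et wi assms by (intro frac_le) auto
        also have "\<dots> \<le> G" using assms by (simp add: G_def)
        finally show ?thesis .
      qed
      show ?thesis unfolding C_def
        by (rule final_step[OF i x_supp op_bounds(1)[where hb="hbar N" and w=w and i=i, OF hb0 wi(1)] Kx0 KG t1 assms(6) L L4])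
    qed
    have Kp0: "hbar N * w i / 2 \<ge> 0" using hb0 wi(1) by simp
    have p: "trace_norm (commutator (p_op (hbar N) w i) (omegaN w E N)) \<le> C * t\<^sup>2"
    proof -
      have KG: "hbar N * w i / 2 * (t * E + 2) \<le> G"
      proof -
        have "hbar N * w i / 2 * (t * E + 2) = w i * ((t * E + 2) / t) / 2"
          by (simp add: hb field_simps)
        also have "\<dots> \<le> w 3 * (E + 2) / 2"
          using Et wi assms t1 by (intro divide_right_mono mult_mono) auto
        also have "\<dots> \<le> G" using assms by (simp add: G_def)
        finally show ?thesis .
      qed
      show ?thesis unfolding C_def
        by (rule final_step[OF i p_supp op_bounds(2)[where hb="hbar N" and w=w and i=i, OF hb0 wi(1)] Kp0 KG t1 assms(6) L L4])
    qed
    show "trace_norm (commutator (x_op (hbar N) w i) (omegaN w E N)) \<le> C * real N * hbar N"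
      using x Nh by linarith
    show "trace_norm (commutator (p_op (hbar N) w i) (omegaN w E N)) \<le> C * real N * hbar N"
      using p Nh by linarith
  qed
qed

end
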